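(* Let $\psi_1\in \mathrm O(\Gamma\oplus U)$ act as the identity on $\Gamma$ and interchange $w$ and $w^*$. Let $$S=\{((P,\omega),B)\in \mathrm{Gr}^{\rm po}_{2,1}(\Gamma_{\mathbb R})\times\Gamma_{\mathbb R} : B\perp P,\ B\perp\omega,\ \omega^2\neq B^2\}.$$ For $((P,\omega),B)\in S$ put $c=\frac{2}{\omega^2-B^2}$. Then $((P,c\omega),cB)\in S$ and $$\psi_1(\gamma((P,\omega),B))=\gamma((P,c\omega),cB).$$
   Context: $\Gamma$ is a lattice of signature $(3,b-3)$. $(w,w^* )$ is a standard basis of the hyperbolic plane $U$ ($w^2={w^*}^2=0$, $\langle w,w^*\rangle=1$). $\mathrm{Gr}^{\rm po}_{2,1}(\Gamma_{\mathbb R})=\{(P,\omega): P$ an oriented positive definite plane in $\Gamma_{\mathbb R}$, $\omega\in P^\perp$, $\omega^2>0\}$. Isometries act on pairs $(H_1,H_2)$ of orthogonal oriented positive planes in $\Gamma_{\mathbb R}\oplus U_{\mathbb R}$ componentwise, transporting orientations. The map $\gamma$ sends $((P,\omega),B)$ to $(H_1,H_2)$ where: - $H_1=\{x-\langle x,B\rangle w: x\in P\}$, oriented via $P$; - $H_2$ has the ordered basis $\big(\tfrac12(\alpha-B^2)w+w^*+B,\ \omega-\langle\omega,B\rangle w\big)$, with $\alpha=\omega^2$. *)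

theory Defs
  imports "HOL-Analysis.Analysis"
begin

text \<open>Gamma_R is modelled as real^'n with the diagonal form of signature (3, b-3),
  b = CARD('n), given by eps (entries +1/-1, exactly three +1).
  Gamma_R (+) U_R is modelled as real^'n x real x real, with w = (0,1,0), w* = (0,0,1).\<close>

definition gform :: "('n::finite \<Rightarrow> real) \<Rightarrow> real^'n \<Rightarrow> real^'n \<Rightarrow> real" where
  "gform eps x y = (\<Sum>i\<in>UNIV. eps i * x$i * y$i)"

definition lform :: "('n::finite \<Rightarrow> real) \<Rightarrow> (real^'n) \<times> real \<times> real \<Rightarrow> (real^'n) \<times> real \<times> real \<Rightarrow> real" where
  "lform eps X Y = gform eps (fst X) (fst Y) + fst (snd X) * snd (snd Y) + snd (snd X) * fst (snd Y)"

definition wvec :: "(real^'n) \<times> real \<times> real" where "wvec = (0, 1, 0)"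
definition wstar :: "(real^'n) \<times> real \<times> real" where "wstar = (0, 0, 1)"
definition emb :: "real^'n \<Rightarrow> (real^'n) \<times> real \<times> real" where "emb x = (x, 0, 0)"

text \<open>The oriented plane with oriented basis (u,v): the set of all positively oriented bases.\<close>
definition oplane :: "'a::real_vector \<Rightarrow> 'a \<Rightarrow> ('a \<times> 'a) set" where
  "oplane u v = {(u', v'). \<exists>a b c d. u' = a *\<^sub>R u + b *\<^sub>R v \<and> v' = c *\<^sub>R u + d *\<^sub>R v \<and> a * d - b * c > 0}"

definition act :: "('a \<Rightarrow> 'b) \<Rightarrow> ('a \<times> 'a) set \<Rightarrow> ('b \<times> 'b) set" where
  "act f H = (\<lambda>(u, v). (f u, f v)) ` H"

definition pos_plane :: "('n::finite \<Rightarrow> real) \<Rightarrow> real^'n \<Rightarrow> real^'n \<Rightarrow> bool" where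
  "pos_plane eps p1 p2 = (\<forall>s t. (s, t) \<noteq> (0, 0) \<longrightarrow>
      gform eps (s *\<^sub>R p1 + t *\<^sub>R p2) (s *\<^sub>R p1 + t *\<^sub>R p2) > 0)"

text \<open>((P,omega)) in Gr^po_{2,1}, with P the oriented plane with oriented basis (p1,p2).\<close>
definition GrPO :: "('n::finite \<Rightarrow> real) \<Rightarrow> real^'n \<Rightarrow> real^'n \<Rightarrow> real^'n \<Rightarrow> bool" where
  "GrPO eps p1 p2 \<omega> = (pos_plane eps p1 p2 \<and> gform eps \<omega> p1 = 0 \<and> gform eps \<omega> p2 = 0
      \<and> gform eps \<omega> \<omega> > 0)"

definition inS :: "('n::finite \<Rightarrow> real) \<Rightarrow> real^'n \<Rightarrow> real^'n \<Rightarrow> real^'n \<Rightarrow> real^'n \<Rightarrow> bool" where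
  "inS eps p1 p2 \<omega> B = (GrPO eps p1 p2 \<omega> \<and> gform eps B p1 = 0 \<and> gform eps B p2 = 0
      \<and> gform eps B \<omega> = 0 \<and> gform eps \<omega> \<omega> \<noteq> gform eps B B)"

definition gamma :: "('n::finite \<Rightarrow> real) \<Rightarrow> real^'n \<Rightarrow> real^'n \<Rightarrow> real^'n \<Rightarrow> real^'n
    \<Rightarrow> (((real^'n) \<times> real \<times> real) \<times> ((real^'n) \<times> real \<times> real)) set
     \<times> (((real^'n) \<times> real \<times> real) \<times> ((real^'n) \<times> real \<times> real)) set" where
  "gamma eps p1 p2 \<omega> B =
    (oplane (emb p1 - gform eps p1 B *\<^sub>R wvec) (emb p2 - gform eps p2 B *\<^sub>R wvec),
     oplane ((1/2 * (gform eps \<omega> \<omega> - gform eps B B)) *\<^sub>R wvec + wstar + emb B)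
            (emb \<omega> - gform eps \<omega> B *\<^sub>R wvec))"

end

theory Submission
  imports Defs
begin

lemma gform_scaleL: "gform eps (c *\<^sub>R x) y = c * gform eps x y"
  unfolding gform_def by (simp add: sum_distrib_left algebra_simps)

lemma gform_scaleR: "gform eps x (c *\<^sub>R y) = c * gform eps x y"
  unfolding gform_def by (simp add: sum_distrib_left algebra_simps)

lemma gform_sym: "gform eps x y = gform eps y x"
  unfolding gform_def by (simp add: algebra_simps)

lemma oplane_scale:
  fixes u v :: "'a::real_vector"
  assumes k: "k \<noteq> 0"
  shows "oplane (k *\<^sub>R u) (k *\<^sub>R v) = oplane u v"
proof
  show "oplane (k *\<^sub>R u) (k *\<^sub>R v) \<subseteq> oplane u v"
  proof clarify
    fix x y assume "(x, y) \<in> oplane (k *\<^sub>R u) (k *\<^sub>R v)"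
    then obtain a b c d where h: "x = a *\<^sub>R k *\<^sub>R u + b *\<^sub>R k *\<^sub>R v" "y = c *\<^sub>R k *\<^sub>R u + d *\<^sub>R k *\<^sub>R v" "a * d - b * c > 0"
      unfolding oplane_def by auto
    have "(k*a) * (k*d) - (k*b) * (k*c) = k^2 * (a*d - b*c)" by (simp add: algebra_simps power2_eq_square)
    also have "\<dots> > 0" using h(3) k by simp
    finally have "(k*a) * (k*d) - (k*b) * (k*c) > 0" .
    then show "(x, y) \<in> oplane u v" unfolding oplane_def using h
      by (intro CollectI case_prodI exI[of _ "k*a"] exI[of _ "k*b"] exI[of _ "k*c"] exI[of _ "k*d"]) (simp add: mult.commute)
  qed
  show "oplane u v \<subseteq> oplane (k *\<^sub>R u) (k *\<^sub>R v)"
  proof clarify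
    fix x y assume "(x, y) \<in> oplane u v"
    then obtain a b c d where h: "x = a *\<^sub>R u + b *\<^sub>R v" "y = c *\<^sub>R u + d *\<^sub>R v" "a * d - b * c > 0"
      unfolding oplane_def by auto
    have "(a/k) * (d/k) - (b/k) * (c/k) = (a*d - b*c) / k^2" by (simp add: power2_eq_square diff_divide_distrib)
    also have "\<dots> > 0" using h(3) k by simp
    finally have "(a/k) * (d/k) - (b/k) * (c/k) > 0" .
    then show "(x, y) \<in> oplane (k *\<^sub>R u) (k *\<^sub>R v)" unfolding oplane_def using h k
      by (intro CollectI case_prodI exI[of _ "a/k"] exI[of _ "b/k"] exI[of _ "c/k"] exI[of _ "d/k"]) simp
  qed
qed

lemma act_oplane:
  assumes "linear f"
  shows "act f (oplane u v) = oplane (f u) (f v)"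
proof
  show "act f (oplane u v) \<subseteq> oplane (f u) (f v)"
    unfolding act_def oplane_def using assms
    by (auto simp: linear_add linear_scale) blast
  show "oplane (f u) (f v) \<subseteq> act f (oplane u v)"
  proof clarify
    fix x y assume "(x, y) \<in> oplane (f u) (f v)"
    then obtain a b c d where h: "x = a *\<^sub>R f u + b *\<^sub>R f v" "y = c *\<^sub>R f u + d *\<^sub>R f v" "a * d - b * c > 0"
      unfolding oplane_def by auto
    have m: "(a *\<^sub>R u + b *\<^sub>R v, c *\<^sub>R u + d *\<^sub>R v) \<in> oplane u v"
      unfolding oplane_def using h(3) by blast
    have "(x, y) = (\<lambda>(p, q). (f p, f q)) (a *\<^sub>R u + b *\<^sub>R v, c *\<^sub>R u + d *\<^sub>R v)"
      using h assms by (simp add: linear_add linear_scale)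
    then show "(x, y) \<in> act f (oplane u v)" unfolding act_def using m by blast
  qed
qed

theorem mainTheorem12:
  fixes eps :: "'n::finite \<Rightarrow> real"
    and psi :: "(real^'n) \<times> real \<times> real \<Rightarrow> (real^'n) \<times> real \<times> real"
    and p1 p2 \<omega> B :: "real^'n"
  assumes sig: "\<forall>i. eps i = 1 \<or> eps i = -1" "card {i. eps i = 1} = 3"
    and psi_lin: "linear psi"
    and psi_isom: "\<forall>X Y. lform eps (psi X) (psi Y) = lform eps X Y"
    and psi_id: "\<forall>x. psi (emb x) = emb x"
    and psi_w: "psi wvec = wstar" and psi_wstar: "psi wstar = wvec"
    and S: "inS eps p1 p2 \<omega> B"
  shows "let c = 2 / (gform eps \<omega> \<omega> - gform eps B B) in
           inS eps p1 p2 (c *\<^sub>R \<omega>) (c *\<^sub>R B) \<and>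
           (act psi (fst (gamma eps p1 p2 \<omega> B)), act psi (snd (gamma eps p1 p2 \<omega> B)))
             = gamma eps p1 p2 (c *\<^sub>R \<omega>) (c *\<^sub>R B)"
proof -
  define \<alpha> where "\<alpha> = gform eps \<omega> \<omega>"
  define \<beta> where "\<beta> = gform eps B B"
  define c where "c = 2 / (\<alpha> - \<beta>)"
  from S have ne: "\<alpha> \<noteq> \<beta>" and apos: "\<alpha> > 0" and pp: "pos_plane eps p1 p2"
    and o1: "gform eps \<omega> p1 = 0" and o2: "gform eps \<omega> p2 = 0"
    and b1: "gform eps B p1 = 0" and b2: "gform eps B p2 = 0" and bo: "gform eps B \<omega> = 0"
    unfolding inS_def GrPO_def \<alpha>_def \<beta>_def by auto
  have c0: "c \<noteq> 0" using ne unfolding c_def by simp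
  have cc: "c * (\<alpha> - \<beta>) = 2" using ne unfolding c_def by (simp add: field_simps)
  have p1B: "gform eps p1 B = 0" "gform eps p2 B = 0" "gform eps \<omega> B = 0"
    using b1 b2 bo gform_sym by metis+
  have inS': "inS eps p1 p2 (c *\<^sub>R \<omega>) (c *\<^sub>R B)"
  proof -
    have "c * (c * \<alpha>) > 0" using apos c0 by (metis mult.assoc mult_pos_pos not_real_square_gt_zero)
    moreover have "c * (c * \<alpha>) \<noteq> c * (c * \<beta>)" using c0 ne by simp
    ultimately show ?thesis unfolding inS_def GrPO_def
      using pp o1 o2 b1 b2 bo by (simp add: gform_scaleL gform_scaleR \<alpha>_def[symmetric] \<beta>_def[symmetric])
  qed
  have psiform: "psi (x, a, b) = (x, b, a)" for x a b
  proof -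
    have "(x, a, b) = emb x + a *\<^sub>R wvec + b *\<^sub>R wstar" by (simp add: emb_def wvec_def wstar_def)
    hence "psi (x, a, b) = psi (emb x) + a *\<^sub>R psi wvec + b *\<^sub>R psi wstar"
      using psi_lin by (simp add: linear_add linear_scale)
    thus ?thesis using psi_id psi_w psi_wstar by (simp add: emb_def wvec_def wstar_def)
  qed
  have psi0: "psi (x, 0) = (x, 0)" for x
    using psiform[of x 0 0] by (simp add: zero_prod_def)
  have first: "act psi (fst (gamma eps p1 p2 \<omega> B)) = fst (gamma eps p1 p2 (c *\<^sub>R \<omega>) (c *\<^sub>R B))"
    unfolding gamma_def using psi_lin p1B
    by (simp add: act_oplane gform_scaleR psiform psi0 emb_def wvec_def)
  have e1: "psi ((1/2 * (\<alpha> - \<beta>)) *\<^sub>R wvec + wstar + emb B)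
      = (1/c) *\<^sub>R ((1/2 * (c*(c*\<alpha>) - c*(c*\<beta>))) *\<^sub>R wvec + wstar + emb (c *\<^sub>R B))"
  proof -
    have "1/2 * (c*(c*\<alpha>) - c*(c*\<beta>)) = c" using cc by (simp add: algebra_simps)
    thus ?thesis using c0 cc
      by (simp add: psiform emb_def wvec_def wstar_def field_simps)
  qed
  have e2: "psi (emb \<omega> - gform eps \<omega> B *\<^sub>R wvec) = (1/c) *\<^sub>R (emb (c *\<^sub>R \<omega>) - (c * (c * gform eps \<omega> B)) *\<^sub>R wvec)"
    using c0 p1B by (simp add: psiform psi0 emb_def wvec_def)
  have ci: "1/c \<noteq> 0" using c0 by simp
  have second: "act psi (snd (gamma eps p1 p2 \<omega> B)) = snd (gamma eps p1 p2 (c *\<^sub>R \<omega>) (c *\<^sub>R B))"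
  proof -
    have "act psi (snd (gamma eps p1 p2 \<omega> B)) = oplane (psi ((1/2 * (\<alpha> - \<beta>)) *\<^sub>R wvec + wstar + emb B))
            (psi (emb \<omega> - gform eps \<omega> B *\<^sub>R wvec))"
      unfolding gamma_def snd_conv \<alpha>_def \<beta>_def using psi_lin by (rule act_oplane)
    also have "\<dots> = snd (gamma eps p1 p2 (c *\<^sub>R \<omega>) (c *\<^sub>R B))"
      unfolding e1 e2 oplane_scale[OF ci]
      unfolding gamma_def snd_conv gform_scaleL gform_scaleR \<alpha>_def \<beta>_def ..
    finally show ?thesis .
  qed
  show ?thesis unfolding Let_def \<alpha>_def[symmetric] \<beta>_def[symmetric] c_def[symmetric]
    using inS' first second by (simp add: prod_eq_iff)
qed

end
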